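(* Let $k\geq 1$ be fixed and $p\neq 0$ real. The inequality $$\frac{2}{k+2}\left( \frac{\sinh x}{x}\right) ^{kp}+\frac{k}{k+2}\left( \frac{\tanh x}{x}\right) ^{p}>1$$ holds for all $x\in (0,\infty)$ if and only if $p>0$ or $p\leq -\dfrac{12}{5(k+2)}$. *)

theory Defs
  imports "HOL-Analysis.Analysis"
begin

end

theory Submission
  imports Defs "HOL-Real_Asymp.Real_Asymp"
begin

lemma cosh_pos': "0 < cosh (y::real)"
  by (simp add: cosh_real_pos)

lemma laz_deriv: "DERIV (\<lambda>y::real. sinh y * cosh y powr (-1/3) - y) y :>
   (cosh y * cosh y powr (-1/3) + sinh y * ((-1/3) * cosh y powr (-1/3 - 1) * sinh y) - 1)"
  using cosh_pos'[of y]
  by (auto intro!: derivative_eq_intros)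

lemma laz_deriv_pos:
  assumes "y > 0"
  shows "cosh y * cosh y powr (-1/3) + sinh y * ((-1/3) * cosh y powr (-1/3 - 1) * sinh y) - 1 > (0::real)"
proof -
  define z where "z = cosh y powr (1/3)"
  have c1: "cosh y > 1" using assms cosh_real_nonneg_less_iff[of 0 y] by simp
  have zpos: "z > 1" unfolding z_def using c1 powr_less_mono2[of "1/3" 1 "cosh y"] by simp
  have z3: "z^3 = cosh y" unfolding z_def using cosh_pos'[of y]
    by (simp add: powr_realpow [symmetric] powr_powr)
  have m1: "cosh y powr (-1/3) = 1/z" unfolding z_def by (simp add: powr_minus_divide)
  have m4: "cosh y powr (-1/3 - 1) = 1/z^4"
  proof -
    have "cosh y powr (-1/3 - 1) = 1 / cosh y powr (4/3)" by (simp add: powr_minus_divide)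
    also have "cosh y powr (4/3) = z^4" unfolding z_def using cosh_pos'[of y]
      by (simp add: powr_realpow [symmetric] powr_powr)
    finally show ?thesis .
  qed
  have s2: "sinh y * sinh y = z^6 - 1"
  proof -
    have "sinh y * sinh y = cosh y ^2 - 1" using cosh_square_eq[of y] by (simp add: power2_eq_square)
    also have "\<dots> = (z^3)^2 - 1" using z3 by simp
    also have "\<dots> = z^6 - 1" by (simp add: power_mult[symmetric])
    finally show ?thesis .
  qed
  have eq: "2*z^6 - 3*z^4 + 1 = (z^2 - 1)^2 * (2*z^2+1)"
    by algebra
  have z2: "z^2 > 1" using zpos by (simp add: one_less_power)
  have z2': "z^2 - 1 > 0" using z2 by simp
  have z3': "2*z^2+1 > 0" using z2 by simp
  have "cosh y * cosh y powr (-1/3) + sinh y * ((-1/3) * cosh y powr (-1/3 - 1) * sinh y) - 1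
      = z^3 / z - (z^6 - 1)/(3*z^4) - 1"
    using m1 m4 s2 z3 by (simp add: algebra_simps)
  also have "\<dots> = (2*z^6 - 3*z^4 + 1) / (3*z^4)"
    using zpos by (simp add: field_simps power_numeral_reduce)
  also have "\<dots> = (z^2 - 1)^2 * (2*z^2+1) / (3*z^4)"
    using eq by simp
  also have "\<dots> > 0"
    by (rule divide_pos_pos[OF mult_pos_pos[OF zero_less_power[OF z2'] z3']]) (use zpos in simp)
  finally show ?thesis .
qed



lemma poly1_id: "(1+v)^4*(2+(1+v)^4)^9 - 243*(1+2*(1+v)^6)^4 = v^3 * (349920 + 5248800 * v + 41436360 * v^2 + 224505108 * v^3 + 927000936 * v^4 + 3084305229 * v^5 + 8561212192 * v^6 + 20307689392 * v^7 + 41916908256 * v^8 + 76385800840 * v^9 + 124386530464 * v^10 + 182847020688 * v^11 + 244681399776 * v^12 + 300034344126 * v^13 + 338738588064 * v^14 + 353186948112 * v^15 + 340621095552 * v^16 + 303971154480 * v^17 + 250876065552 * v^18 + 191256026568 * v^19 + 134431618032 * v^20 + 86910692778 * v^21 + 51526725120 * v^22 + 27913038912 * v^23 + 13756818880 * v^24 + 6136718512 * v^25 + 2462773920 * v^26 + 882792208 * v^27 + 280229344 * v^28 + 77965119 * v^29 + 18772080 * v^30 + 3849720 * v^31 + 658656 * v^32 + 91408 * v^33 + 9880 * v^34 + 780 * v^35 + 40 * v^36 + 1 * v^37)" for v::real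
  by algebra
lemma poly1_pos: "v > 0 \<Longrightarrow> 0 < v^3 * (349920 + 5248800 * v + 41436360 * v^2 + 224505108 * v^3 + 927000936 * v^4 + 3084305229 * v^5 + 8561212192 * v^6 + 20307689392 * v^7 + 41916908256 * v^8 + 76385800840 * v^9 + 124386530464 * v^10 + 182847020688 * v^11 + 244681399776 * v^12 + 300034344126 * v^13 + 338738588064 * v^14 + 353186948112 * v^15 + 340621095552 * v^16 + 303971154480 * v^17 + 250876065552 * v^18 + 191256026568 * v^19 + 134431618032 * v^20 + 86910692778 * v^21 + 51526725120 * v^22 + 27913038912 * v^23 + 13756818880 * v^24 + 6136718512 * v^25 + 2462773920 * v^26 + 882792208 * v^27 + 280229344 * v^28 + 77965119 * v^29 + 18772080 * v^30 + 3849720 * v^31 + 658656 * v^32 + 91408 * v^33 + 9880 * v^34 + 780 * v^35 + 40 * v^36 + 1 * v^37)" for v::real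
  by (intro mult_pos_pos add_pos_pos; simp)

lemma poly1: "w > 1 \<Longrightarrow> 243*(1+2*w^6)^4 < w^4*(2+w^4)^9" for w::real
  using poly1_id[of "w-1"] poly1_pos[of "w-1"] by simp

lemma key_deriv: "DERIV (\<lambda>y::real. y - sinh y / ((2 + cosh y powr (4/5))/3) powr (5/4)) y :>
   1 - (cosh y * ((2 + cosh y powr (4/5))/3) powr (5/4)
        - sinh y * ((5/4) * ((2 + cosh y powr (4/5))/3) powr (5/4 - 1) * ((4/5) * cosh y powr (4/5 - 1) * sinh y / 3)))
       / (((2 + cosh y powr (4/5))/3) powr (5/4))^2"
proof -
  have "0 < cosh y powr (4/5)" using cosh_pos'[of y] by simp
  then have "0 < 2 + cosh y powr (4/5)" by linarith
  then show ?thesis using cosh_pos'[of y]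
    by (auto intro!: derivative_eq_intros simp: power2_eq_square)
qed

lemma key_deriv_pos:
  assumes "y > (0::real)"
  shows "1 - (cosh y * ((2 + cosh y powr (4/5))/3) powr (5/4)
        - sinh y * ((5/4) * ((2 + cosh y powr (4/5))/3) powr (5/4 - 1) * ((4/5) * cosh y powr (4/5 - 1) * sinh y / 3)))
       / (((2 + cosh y powr (4/5))/3) powr (5/4))^2 > 0"
proof -
  define w where "w = cosh y powr (1/5)"
  have cp: "cosh y > 0" by (rule cosh_pos')
  have c1: "cosh y > 1" using assms cosh_real_nonneg_less_iff[of 0 y] by simp
  have w1: "w > 1" unfolding w_def using c1 powr_less_mono2[of "1/5" 1 "cosh y"] by simp
  have w5: "w^5 = cosh y" unfolding w_def using cp
    by (simp add: powr_realpow [symmetric] powr_powr)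
  have w4: "cosh y powr (4/5) = w^4" unfolding w_def using cp
    by (simp add: powr_realpow [symmetric] powr_powr)
  have wm: "cosh y powr (4/5 - 1) = 1/w" unfolding w_def using cp
    by (simp add: powr_minus_divide)
  have s2: "sinh y * sinh y = w^10 - 1"
  proof -
    have "sinh y * sinh y = cosh y ^2 - 1" using cosh_square_eq[of y] by (simp add: power2_eq_square)
    also have "\<dots> = (w^5)^2 - 1" using w5 by simp
    also have "\<dots> = w^10 - 1" by (simp add: power_mult[symmetric])
    finally show ?thesis .
  qed
  define m where "m = (2 + w^4)/3"
  have mpos: "m > 0" unfolding m_def using w1 by (simp add: add_pos_nonneg)
  define r where "r = m powr (1/4)"
  have rpos: "r > 0" unfolding r_def using mpos by simp
  have r4: "r^4 = m" unfolding r_def using mpos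
    by (simp add: powr_realpow [symmetric] powr_powr)
  have Q: "m powr (5/4) = m * r"
  proof -
    have "m powr (5/4) = m powr (1 + 1/4)" by simp
    also have "\<dots> = m powr 1 * m powr (1/4)" by (rule powr_add)
    finally show ?thesis unfolding r_def using mpos by simp
  qed
  have Q1: "m powr (5/4 - 1) = r" unfolding r_def by simp
  have num: "cosh y * (m * r) - sinh y * ((5/4) * r * ((4/5) * (1/w) * sinh y / 3))
             = r * ((2*w^6+1)/(3*w))"
  proof -
    have "cosh y * (m * r) - sinh y * ((5/4) * r * ((4/5) * (1/w) * sinh y / 3))
        = r * (w^5 * m - (sinh y * sinh y)/(3*w))"
      using w5 w1 by (simp add: field_simps)
    also have "\<dots> = r * (w^5 * m - (w^10 - 1)/(3*w))" using s2 by simp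
    also have "\<dots> = r * ((2*w^6+1)/(3*w))"
      using w1 unfolding m_def by (simp add: field_simps power_numeral_reduce)
    finally show ?thesis .
  qed
  have X: "(2*w^6+1)/(3*w) < m^2 * r"
  proof (rule power_less_imp_less_base[where n=4])
    have "((2*w^6+1)/(3*w))^4 = (1+2*w^6)^4 / (81 * w^4)"
      by (simp add: power_divide power_mult_distrib algebra_simps)
    also have "\<dots> < (2+w^4)^9 / 19683"
      using poly1[OF w1] w1 by (simp add: field_simps)
    also have "\<dots> = m^9" unfolding m_def by (simp add: power_divide)
    also have "m^9 = (m^2 * r)^4"
    proof -
      have "(m^2*r)^4 = m^8 * r^4" by (simp add: power_mult_distrib power_mult[symmetric])
      also have "\<dots> = m^8 * m" using r4 by simp
      also have "\<dots> = m^9" by (simp add: power_Suc2[symmetric] del: power_Suc2)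
      finally show ?thesis by simp
    qed
    finally show "((2*w^6+1)/(3*w))^4 < (m^2 * r)^4" .
    show "0 \<le> m^2 * r" using mpos rpos by simp
  qed
  have "(cosh y * ((2 + cosh y powr (4/5))/3) powr (5/4)
        - sinh y * ((5/4) * ((2 + cosh y powr (4/5))/3) powr (5/4 - 1) * ((4/5) * cosh y powr (4/5 - 1) * sinh y / 3)))
       / (((2 + cosh y powr (4/5))/3) powr (5/4))^2 = r * ((2*w^6+1)/(3*w)) / (m * r)^2"
    unfolding w4 wm m_def[symmetric] Q Q1 num ..
  also have "\<dots> < 1"
  proof -
    have "r * ((2*w^6+1)/(3*w)) < r * (m^2 * r)" by (rule mult_strict_left_mono[OF X rpos])
    also have "\<dots> = (m*r)^2" by (simp add: power2_eq_square)
    finally have lt: "r * ((2*w^6+1)/(3*w)) < (m*r)^2" .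
    have pos: "(m*r)^2 > 0" using mpos rpos by simp
    show ?thesis using lt by (rule iffD2[OF divide_less_eq_1_pos[OF pos]])
  qed
  finally show ?thesis by simp
qed


lemma lazarevic:
  assumes "x > (0::real)"
  shows "x^3 * cosh x < sinh x ^ 3"
proof -
  let ?f = "\<lambda>y::real. sinh y * cosh y powr (-1/3) - y"
  have "?f 0 < ?f x"
  proof (rule DERIV_pos_imp_increasing_open[OF assms])
    show "\<exists>D. DERIV ?f y :> D \<and> D > 0" if "0 < y" "y < x" for y
      using laz_deriv[of y] laz_deriv_pos[of y] that by blast
    show "continuous_on {0..x} ?f"
      by (rule DERIV_atLeastAtMost_imp_continuous_on) (use laz_deriv in blast)
  qed
  then have lt: "x < sinh x * cosh x powr (-1/3)" by simp
  define z where "z = cosh x powr (1/3)"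
  have zpos: "z > 0" unfolding z_def using cosh_pos'[of x] by simp
  have z3: "z^3 = cosh x" unfolding z_def using cosh_pos'[of x]
    by (simp add: powr_realpow [symmetric] powr_powr)
  have eq: "cosh x powr (-1/3) = 1/z" unfolding z_def by (simp add: powr_minus_divide)
  have "x < sinh x / z" using lt unfolding eq by simp
  then have "x * z < sinh x" using pos_less_divide_eq[OF zpos] by blast
  then have "(x*z)^3 < sinh x ^ 3" using assms zpos by (intro power_strict_mono) auto
  then show ?thesis using z3 by (simp add: power_mult_distrib)
qed

lemma sinh_gt: "x > (0::real) \<Longrightarrow> x < sinh x"
proof -
  assume x: "x > 0"
  have "x^3 \<le> x^3 * cosh x" using x cosh_real_ge_1[of x] by simp
  also have "\<dots> < sinh x ^ 3" by (rule lazarevic[OF x])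
  finally have "x^3 < sinh x ^3" .
  then show "x < sinh x" using x by (metis power_less_imp_less_base sinh_real_nonneg_iff less_imp_le)
qed

lemma key_ineq:
  assumes "x > (0::real)"
  shows "sinh x / x < ((2 + cosh x powr (4/5))/3) powr (5/4)"
proof -
  let ?f = "\<lambda>y::real. y - sinh y / ((2 + cosh y powr (4/5))/3) powr (5/4)"
  have "?f 0 < ?f x"
  proof (rule DERIV_pos_imp_increasing_open[OF assms])
    show "\<exists>D. DERIV ?f y :> D \<and> D > 0" if "0 < y" "y < x" for y
      using key_deriv[of y] key_deriv_pos[of y] that by blast
    show "continuous_on {0..x} ?f"
      by (rule DERIV_atLeastAtMost_imp_continuous_on) (use key_deriv in blast)
  qed
  then have lt: "sinh x / ((2 + cosh x powr (4/5))/3) powr (5/4) < x" by simp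
  have "0 < cosh x powr (4/5)" using cosh_pos'[of x] by simp
  then have h2: "0 < 2 + cosh x powr (4/5)" by linarith
  have "0 < (2 + cosh x powr (4/5))/3" using h2 by (rule divide_pos_pos) simp
  then have Qp: "0 < ((2 + cosh x powr (4/5))/3) powr (5/4)" by simp
  have "sinh x < x * ((2 + cosh x powr (4/5))/3) powr (5/4)"
    using lt pos_divide_less_eq[OF Qp] by blast
  then show ?thesis using pos_divide_less_eq[OF assms] by (simp add: mult.commute)
qed


lemma G_ineq:
  fixes A t :: real
  assumes A: "0 < A" "A \<le> 1" and t: "0 < t" "t \<le> 1"
  shows "1 \<le> (2*t/3) * A powr (3-2*t) + (1 - 2*t/3) * (3 - 2*A) powr t"
proof -
  let ?g = "\<lambda>y::real. (2*t/3) * y powr (3-2*t) + (1 - 2*t/3) * (3 - 2*y) powr t"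
  have "?g A \<ge> ?g 1"
  proof (rule DERIV_nonpos_imp_nonincreasing[OF A(2)])
    fix y assume y: "A \<le> y" "y \<le> 1"
    have ypos: "y > 0" using y A by linarith
    have zpos: "3 - 2*y > 0" using y by linarith
    have D: "DERIV ?g y :> (2*t/3)*(3-2*t) * y powr (2-2*t) - 2*t*(1-2*t/3) * (3-2*y) powr (t-1)"
      using ypos zpos
      apply (auto intro!: derivative_eq_intros simp: algebra_simps)
      apply (simp add: field_simps)
      done
    define h where "h = y^2 * (3 - 2*y)"
    have hpos: "h > 0" unfolding h_def using ypos zpos by simp
    have "1 - h = (1-y)^2 * (1 + 2*y)" unfolding h_def by algebra
    moreover have "(1-y)^2 * (1 + 2*y) \<ge> 0" using ypos by simp
    ultimately have h1: "h \<le> 1" by linarith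
    have "h powr (1-t) \<le> 1 powr (1-t)"
      using hpos h1 t by (intro powr_mono2) auto
    then have hp: "h powr (1-t) \<le> 1" by simp
    have "h powr (1-t) = (y^2) powr (1-t) * (3-2*y) powr (1-t)"
      unfolding h_def using ypos zpos by (simp add: powr_mult)
    also have "(y^2) powr (1-t) = y powr (2-2*t)"
    proof -
      have "y^2 = y powr 2" using ypos by simp
      then have "(y^2) powr (1-t) = y powr (2*(1-t))" by (simp add: powr_powr)
      also have "2*(1-t) = 2-2*t" by simp
      finally show ?thesis .
    qed
    finally have "y powr (2-2*t) * (3-2*y) powr (1-t) \<le> 1" using hp by simp
    then have "y powr (2-2*t) \<le> 1 / (3-2*y) powr (1-t)"
      using zpos by (simp add: field_simps)
    also have "1 / (3-2*y) powr (1-t) = (3-2*y) powr (t-1)"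
      by (simp add: powr_minus_divide[symmetric])
    finally have le: "y powr (2-2*t) \<le> (3-2*y) powr (t-1)" .
    have c: "(2*t/3)*(3-2*t) = 2*t*(1-2*t/3)" by (simp add: field_simps)
    have "(2*t/3)*(3-2*t) * y powr (2-2*t) - 2*t*(1-2*t/3) * (3-2*y) powr (t-1)
          = 2*t*(1-2*t/3) * (y powr (2-2*t) - (3-2*y) powr (t-1))"
      unfolding c by (simp add: algebra_simps)
    also have "\<dots> \<le> 0"
      using le t by (intro mult_nonneg_nonpos) auto
    finally show "\<exists>D. DERIV ?g y :> D \<and> D \<le> 0" using D by blast
  qed
  moreover have "?g 1 = 1" by simp
  ultimately show ?thesis by simp
qed

lemma lim_a: "((\<lambda>x::real. ((sinh x / x) powr u - 1 - u*x^2/6)/x^4) \<longlongrightarrow> (u - 1) * u / 72 + u / 120) (at_right 0)"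
  by real_asymp

lemma lim_b: "((\<lambda>x::real. ((tanh x / x) powr u - 1 + u*x^2/3)/x^4) \<longlongrightarrow> (u - 1) * u / 18 + 2 * u / 15) (at_right 0)"
  by real_asymp

lemma comb_id0:
  fixes c1 c2 A B k p x :: real
  assumes "x \<noteq> 0"
  shows "c1*((A-1-k*p*x^2/6)/x^4) + c2*((B-1+p*x^2/3)/x^4)
       = (c1*A + c2*B - (c1+c2) - (c1*k*p/6 - c2*p/3)*x^2)/x^4"
  using assms by (simp add: field_simps)

lemma comb_id:
  fixes c1 c2 A B k p x :: real
  assumes "x \<noteq> 0" "c1 + c2 = 1" "c1*k*p/6 - c2*p/3 = 0"
  shows "c1*((A-1-k*p*x^2/6)/x^4) + c2*((B-1+p*x^2/3)/x^4) = (c1*A + c2*B - 1)/x^4"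
  using comb_id0[OF assms(1), of c1 A k p c2 B] assms(2,3) by simp

lemma fail_case:
  fixes k p :: real
  assumes k: "k \<ge> 1" and p: "p < 0" "- 12 / (5 * (k + 2)) < p"
  shows "\<exists>x>0. 2 / (k + 2) * (sinh x / x) powr (k * p) + k / (k + 2) * (tanh x / x) powr p \<le> 1"
proof -
  define L where "L = 2/(k+2)*((k*p - 1)*(k*p)/72 + k*p/120) + k/(k+2)*((p-1)*p/18 + 2*p/15)"
  let ?fa = "\<lambda>x::real. ((sinh x / x) powr (k*p) - 1 - (k*p)*x^2/6)/x^4"
  let ?fb = "\<lambda>x::real. ((tanh x / x) powr p - 1 + p*x^2/3)/x^4"
  have lim: "((\<lambda>x. 2/(k+2) * ?fa x + k/(k+2) * ?fb x) \<longlongrightarrow> L) (at_right 0)"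
    unfolding L_def by (intro tendsto_intros lim_a lim_b)
  have kp: "k + 2 > 0" using k by simp
  have N: "2*((k*p - 1)*(k*p)/72 + k*p/120) + k*((p-1)*p/18 + 2*p/15) = k*p*(1/15 + p*(k+2)/36)"
    by (simp add: field_simps)
  have "L = (2*((k*p - 1)*(k*p)/72 + k*p/120) + k*((p-1)*p/18 + 2*p/15))/(k+2)"
    unfolding L_def by (simp add: add_divide_distrib)
  then have Leq: "L = k*p/(k+2) * (1/15 + p*(k+2)/36)"
    unfolding N by simp
  have n1: "k*p/(k+2) < 0" using k p kp by (simp add: divide_neg_pos mult_pos_neg)
  have n2: "1/15 + p*(k+2)/36 > 0"
  proof -
    have e: "- 12 / (5 * (k + 2)) = (-12/5)/(k+2)" by simp
    have "- 12 / 5 < p * (k+2)" using p(2) unfolding e pos_divide_less_eq[OF kp] .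
    then show ?thesis by simp
  qed
  have Lneg: "L < 0" unfolding Leq by (rule mult_neg_pos[OF n1 n2])
  have ev: "eventually (\<lambda>x. 2/(k+2) * ?fa x + k/(k+2) * ?fb x < 0) (at_right 0)"
    using order_tendstoD(2)[OF lim Lneg] .
  have "eventually (\<lambda>x. x > 0 \<and> 2/(k+2) * ?fa x + k/(k+2) * ?fb x < 0) (at_right (0::real))"
    using ev eventually_at_right_less[of "0::real"] by eventually_elim auto
  then obtain x where x: "x > 0" "2/(k+2) * ?fa x + k/(k+2) * ?fb x < 0"
    using eventually_happens'[OF trivial_limit_at_right_real] by blast
  have "2/(k+2) * ?fa x + k/(k+2) * ?fb x
      = (2 / (k + 2) * (sinh x / x) powr (k * p) + k / (k + 2) * (tanh x / x) powr p - 1) / x^4"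
  proof (rule comb_id)
    show "x \<noteq> 0" using x(1) by simp
    have "2/(k+2) + k/(k+2) = (2+k)/(k+2)" by (simp add: add_divide_distrib)
    also have "(2+k)/(k+2) = 1" using kp by (simp add: add.commute[of 2 k])
    finally show "2/(k+2) + k/(k+2) = 1" .
    show "2/(k+2)*k*p/6 - k/(k+2)*p/3 = 0" using kp by (simp add: field_simps)
  qed
  with x have "(2 / (k + 2) * (sinh x / x) powr (k * p) + k / (k + 2) * (tanh x / x) powr p - 1) / x^4 < 0"
    by simp
  then have "2 / (k + 2) * (sinh x / x) powr (k * p) + k / (k + 2) * (tanh x / x) powr p - 1 < 0"
    using x(1) by (simp only: divide_less_0_iff zero_less_power) auto
  then have le1: "2 / (k + 2) * (sinh x / x) powr (k * p) + k / (k + 2) * (tanh x / x) powr p \<le> 1"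
    by linarith
  show ?thesis
    by (rule exI[of _ x], rule conjI, rule x(1), rule le1)
qed


lemma pos_case:
  fixes k p x :: real
  assumes k: "k \<ge> 1" and p: "p > 0" and x: "x > 0"
  shows "2 / (k + 2) * (sinh x / x) powr (k * p) + k / (k + 2) * (tanh x / x) powr p > 1"
proof -
  define a where "a = sinh x / x"
  define b where "b = tanh x / x"
  have kp: "k + 2 > 0" using k by simp
  have apos: "a > 0" unfolding a_def using sinh_gt[OF x] x by simp
  have bpos: "b > 0" unfolding b_def using x by simp
  have ab: "a^2 * b = sinh x ^ 3 / (x^3 * cosh x)"
    unfolding a_def b_def tanh_def by (simp add: power2_eq_square power3_eq_cube)
  have ab1: "a^2 * b > 1"
    unfolding ab using lazarevic[OF x] x cosh_pos'[of x] by simp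
  define e where "e = k*p/(k+2)"
  have epos: "e > 0" unfolding e_def using k p kp by simp
  have "(a powr (k*p)) powr (2/(k+2)) * (b powr p) powr (k/(k+2))
        \<le> 2/(k+2) * a powr (k*p) + k/(k+2) * b powr p"
  proof (rule Youngs_inequality_0)
    show "0 \<le> 2/(k+2)" "0 \<le> k/(k+2)" using k kp by auto
    have "2/(k+2) + k/(k+2) = (2+k)/(k+2)" by (simp add: add_divide_distrib)
    also have "(2+k)/(k+2) = 1" using kp by (simp add: add.commute[of 2 k])
    finally show "2/(k+2) + k/(k+2) = 1" .
    show "a powr (k*p) > 0" "b powr p > 0" using apos bpos by auto
  qed
  moreover have "(a powr (k*p)) powr (2/(k+2)) * (b powr p) powr (k/(k+2)) = (a^2 * b) powr e"
  proof -
    have "(a powr (k*p)) powr (2/(k+2)) = a powr (k*p*(2/(k+2)))" by (rule powr_powr)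
    also have "k*p*(2/(k+2)) = 2 * e" unfolding e_def by simp
    also have "a powr (2 * e) = (a powr 2) powr e" by (simp add: powr_powr)
    also have "a powr 2 = a^2" using apos by simp
    finally have 1: "(a powr (k*p)) powr (2/(k+2)) = (a^2) powr e" .
    have "(b powr p) powr (k/(k+2)) = b powr (p*(k/(k+2)))" by (rule powr_powr)
    also have "p*(k/(k+2)) = e" unfolding e_def by simp
    finally have 2: "(b powr p) powr (k/(k+2)) = b powr e" .
    show ?thesis using 1 2 by (simp add: powr_mult)
  qed
  moreover have "(a^2 * b) powr e > 1" using ab1 epos by simp
  ultimately show ?thesis unfolding a_def b_def by linarith
qed

lemma bnd_case:
  fixes k x :: real
  assumes k: "k \<ge> 1" and x: "x > 0"
  shows "2 / (k + 2) * (sinh x / x) powr (k * (- 12 / (5 * (k + 2))))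
          + k / (k + 2) * (tanh x / x) powr (- 12 / (5 * (k + 2))) > 1"
proof -
  define a where "a = sinh x / x"
  define C where "C = cosh x"
  define m where "m = (2 + C powr (4/5))/3"
  define A where "A = a powr (-4/5)"
  define t where "t = 3/(k+2)"
  have kp: "k + 2 > 0" using k by simp
  have a1: "a > 1" unfolding a_def using sinh_gt[OF x] x by simp
  have Cpos: "C > 0" unfolding C_def by (rule cosh_pos')
  have mpos: "m > 0" unfolding m_def using Cpos by (simp add: add_pos_nonneg)
  have key: "a < m powr (5/4)" unfolding a_def m_def C_def by (rule key_ineq[OF x])
  have "a powr (4/5) < (m powr (5/4)) powr (4/5)"
    using key a1 by (intro powr_less_mono2) auto
  also have "\<dots> = m" using mpos by (simp add: powr_powr)
  finally have am: "a powr (4/5) < m" .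
  have a45: "a powr (4/5) > 1" using a1 by simp
  have Aeq: "A = 1 / a powr (4/5)" unfolding A_def by (simp add: powr_minus_divide)
  have Apos: "A > 0" unfolding A_def using a1 by simp
  have a45p: "0 < a powr (4/5)" using a45 by linarith
  have A1: "A < 1" unfolding Aeq by (rule iffD2[OF divide_less_eq_1_pos[OF a45p] a45])
  define B where "B = (tanh x / x) powr (-4/5)"
  have "tanh x / x = a / C" unfolding a_def C_def tanh_def by simp
  then have Beq: "B = A * C powr (4/5)"
    unfolding B_def A_def using Cpos by (simp add: powr_divide powr_minus_divide)
  have "2*A + B = A * (3*m)" unfolding Beq m_def by (simp add: algebra_simps)
  also have "\<dots> = 3 * (m / a powr (4/5))" unfolding Aeq by simp
  also have "\<dots> > 3"
  proof -
    have "1 < m / a powr (4/5)" by (rule iffD2[OF less_divide_eq_1_pos[OF a45p] am])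
    then show ?thesis by simp
  qed
  finally have AB: "2*A + B > 3" .
  have tpos: "t > 0" unfolding t_def using kp by simp
  have t1: "t \<le> 1" unfolding t_def using k by simp
  have "B powr t > (3 - 2*A) powr t"
    using AB A1 tpos by (intro powr_less_mono2) auto
  moreover have "1 - 2*t/3 > 0" using t1 by simp
  ultimately have "(1 - 2*t/3) * B powr t > (1 - 2*t/3) * (3 - 2*A) powr t" by simp
  moreover have "1 \<le> (2*t/3) * A powr (3-2*t) + (1 - 2*t/3) * (3 - 2*A) powr t"
    using G_ineq[of A t] Apos A1 tpos t1 by simp
  ultimately have main: "(2*t/3) * A powr (3-2*t) + (1 - 2*t/3) * B powr t > 1" by linarith
  have e1: "A powr (3-2*t) = (sinh x / x) powr (k * (- 12 / (5 * (k + 2))))"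
  proof -
    have "A powr (3-2*t) = a powr (-4/5 * (3-2*t))" unfolding A_def by (simp add: powr_powr)
    also have "-4/5 * (3-2*t) = k * (- 12 / (5 * (k + 2)))"
      unfolding t_def using kp by (simp add: field_simps)
    finally show ?thesis unfolding a_def .
  qed
  have e2: "B powr t = (tanh x / x) powr (- 12 / (5 * (k + 2)))"
  proof -
    have "B powr t = (tanh x / x) powr (-4/5 * t)" unfolding B_def by (simp add: powr_powr)
    also have "-4/5 * t = - 12 / (5 * (k + 2))"
      unfolding t_def using kp by (simp add: field_simps)
    finally show ?thesis .
  qed
  have w1: "2*t/3 = 2/(k+2)" unfolding t_def using kp by (simp add: field_simps)
  have w2: "1 - 2*t/3 = k/(k+2)" unfolding t_def using kp by (simp add: field_simps)
  have w2': "1 - 2/(k+2) = k/(k+2)" using w2 unfolding w1 .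
  show ?thesis using main unfolding e1 e2 w1 w2' .
qed

lemma lin_id: "w1 * (s * u + (1-s)) + w2 * (s * v + (1-s)) = s * (w1 * u + w2 * v) + (1-s) * (w1+w2)" for w1 w2 s u v :: real
  by (simp add: algebra_simps)

lemma neg_case:
  fixes k p x :: real
  assumes k: "k \<ge> 1" and p: "p \<le> - 12 / (5 * (k + 2))" and x: "x > 0"
  shows "2 / (k + 2) * (sinh x / x) powr (k * p) + k / (k + 2) * (tanh x / x) powr p > 1"
proof -
  define p0 where "p0 = - 12 / (5 * (k + 2))"
  have kp: "k + 2 > 0" using k by simp
  have p0neg: "p0 < 0" unfolding p0_def using kp by (simp add: divide_neg_pos)
  have pp0: "p \<le> p0" using p unfolding p0_def .
  have pneg: "p < 0" using pp0 p0neg by simp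
  define s where "s = p0 / p"
  have spos: "s > 0" unfolding s_def using pneg p0neg by (simp add: divide_neg_neg)
  have s1: "s \<le> 1" unfolding s_def using pneg pp0 by (simp add: divide_le_eq_1_neg)
  have ps: "p * s = p0" unfolding s_def using pneg by simp
  define a where "a = sinh x / x"
  define b where "b = tanh x / x"
  have apos: "a > 0" unfolding a_def using sinh_gt[OF x] x by simp
  have bpos: "b > 0" unfolding b_def using x by simp
  define u where "u = a powr (k*p)"
  define v where "v = b powr p"
  have upos: "u > 0" unfolding u_def using apos by simp
  have vpos: "v > 0" unfolding v_def using bpos by simp
  have bern: "y powr s \<le> s * y + (1 - s)" if "y > 0" for y :: real
    using Youngs_inequality_0[of s "1-s" y 1] spos s1 that by simp
  have "a powr (k*p0) = u powr s" unfolding u_def using ps by (simp add: powr_powr algebra_simps)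
  then have ua: "a powr (k*p0) \<le> s * u + (1-s)" using bern[OF upos] by simp
  have "b powr p0 = v powr s" unfolding v_def using ps by (simp add: powr_powr)
  then have vb: "b powr p0 \<le> s * v + (1-s)" using bern[OF vpos] by simp
  have w1: "2/(k+2) \<ge> 0" "k/(k+2) \<ge> 0" using k kp by auto
  have wsum: "2/(k+2) + k/(k+2) = 1"
  proof -
    have "2/(k+2) + k/(k+2) = (2+k)/(k+2)" by (simp add: add_divide_distrib)
    also have "(2+k)/(k+2) = 1" using kp by (simp add: add.commute[of 2 k])
    finally show ?thesis .
  qed
  have B: "2/(k+2) * a powr (k*p0) + k/(k+2) * b powr p0 > 1"
    unfolding a_def b_def p0_def by (rule bnd_case[OF k x])
  have "2/(k+2) * a powr (k*p0) + k/(k+2) * b powr p0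
        \<le> 2/(k+2) * (s * u + (1-s)) + k/(k+2) * (s * v + (1-s))"
    using ua vb w1 by (intro add_mono mult_left_mono) auto
  also have "\<dots> = s * (2/(k+2) * u + k/(k+2) * v) + (1-s) * (2/(k+2) + k/(k+2))"
    by (rule lin_id)
  also have "\<dots> = s * (2/(k+2) * u + k/(k+2) * v) + (1-s)" unfolding wsum by simp
  finally have "s * (2/(k+2) * u + k/(k+2) * v) > s * 1" using B by linarith
  then have "2/(k+2) * u + k/(k+2) * v > 1" by (rule iffD1[OF mult_less_cancel_left_pos[OF spos]])
  then show ?thesis unfolding u_def v_def a_def b_def .
qed

theorem theorem3p3:
  fixes k p :: real
  assumes "k \<ge> 1" and "p \<noteq> 0"
  shows "(\<forall>x::real. x > 0 \<longrightarrow>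
            2 / (k + 2) * (sinh x / x) powr (k * p) + k / (k + 2) * (tanh x / x) powr p > 1)
         \<longleftrightarrow> (p > 0 \<or> p \<le> - 12 / (5 * (k + 2)))"
proof
  assume H: "\<forall>x::real. x > 0 \<longrightarrow>
            2 / (k + 2) * (sinh x / x) powr (k * p) + k / (k + 2) * (tanh x / x) powr p > 1"
  show "p > 0 \<or> p \<le> - 12 / (5 * (k + 2))"
  proof (rule ccontr)
    assume "\<not> (p > 0 \<or> p \<le> - 12 / (5 * (k + 2)))"
    then have "p < 0" "- 12 / (5 * (k + 2)) < p" using assms(2) by auto
    then obtain x where x0: "x > 0" and le: "2 / (k + 2) * (sinh x / x) powr (k * p) + k / (k + 2) * (tanh x / x) powr p \<le> 1"
      using fail_case[OF assms(1)] by blast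
    have "2 / (k + 2) * (sinh x / x) powr (k * p) + k / (k + 2) * (tanh x / x) powr p > 1"
      using H x0 by blast
    with le show False by linarith
  qed
next
  assume P: "p > 0 \<or> p \<le> - 12 / (5 * (k + 2))"
  show "\<forall>x::real. x > 0 \<longrightarrow>
            2 / (k + 2) * (sinh x / x) powr (k * p) + k / (k + 2) * (tanh x / x) powr p > 1"
  proof (intro allI impI)
    fix x :: real assume x: "x > 0"
    from P show "2 / (k + 2) * (sinh x / x) powr (k * p) + k / (k + 2) * (tanh x / x) powr p > 1"
    proof
      assume "p > 0" then show ?thesis by (rule pos_case[OF assms(1) _ x])
    next
      assume "p \<le> - 12 / (5 * (k + 2))" then show ?thesis by (rule neg_case[OF assms(1) _ x])
    qed
  qed
qed

end
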